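(* Let $G$ be a finite group, $S\le G$ a subgroup and $B$ an $S$-Galois algebra over a field $k$ which is simple as an algebra. Then the sequence $1\to\mathrm{Aut}_S(B)\xrightarrow{\mathrm{Ind}}\mathrm{Aut}_G(\mathrm{Ind}_S^G(B))\xrightarrow{\pi}N_G(S)/S$ is exact. Moreover, the sequence $1\to\mathrm{Aut}_S(B)\to\mathrm{Aut}_G(\mathrm{Ind}_S^G(B))\to N_G(S)/S\to1$ is exact if and only if $B\cong B^{(g)}$ as $S$-algebras for all $g\in N_G(S)$.
   Context: An $S$-algebra is a $k$-algebra with $S$ acting by algebra automorphisms; $\mathrm{Aut}_S(B)$ = $S$-equivariant algebra automorphisms. An $S$-Galois algebra is a nonzero $S$-algebra $B$ with $B^S=k$ and $B\otimes_kB\to\prod_{s\in S}B$, $x\otimes y\mapsto(x(s\cdot y))_s$, bijective. $\mathrm{Ind}_S^G(B)=\{r:G\to B\mid r(sg)=s\cdot r(g)\ \forall s\in S,g\in G\}$ with pointwise operations and $(g\cdot r)(x)=r(xg)$. The map $\mathrm{Ind}$ sends $f\in\mathrm{Aut}_S(B)$ to $r\mapsto f\circ r$. For a right coset $Sg$, $\chi_{Sg}\in\mathrm{Ind}_S^G(B)$ is the function equal to $1$ on $Sg$ and $0$ elsewhere; since $B$ is simple these are exactly the central primitive idempotents of $\mathrm{Ind}_S^G(B)$, and $\pi(F)=Sg$ where $Sg$ is the coset with $F(\chi_S)=\chi_{Sg}$; this defines a group homomorphism $\pi:\mathrm{Aut}_G(\mathrm{Ind}_S^G(B))\to N_G(S)/S$.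 For $g\in N_G(S)$, $B^{(g)}$ is $B$ with the $S$-action $h\cdot_g b=(ghg^{-1})\cdot b$. *)

theory Defs
  imports "HOL-Algebra.Algebra"
begin

section \<open>k-algebras (type-based: B is the type 'b, scalars act via sc)\<close>

definition k_algebra :: "('k::field \<Rightarrow> 'b::ring_1 \<Rightarrow> 'b) \<Rightarrow> bool" where
  "k_algebra sc \<longleftrightarrow>
     (\<forall>a x y. sc a (x + y) = sc a x + sc a y) \<and>
     (\<forall>a b x. sc (a + b) x = sc a x + sc b x) \<and>
     (\<forall>a b x. sc (a * b) x = sc a (sc b x)) \<and>
     (\<forall>x. sc 1 x = x) \<and>
     (\<forall>a x y. sc a (x * y) = sc a x * y \<and> sc a (x * y) = x * sc a y)"

definition alg_hom :: "('k::field \<Rightarrow> 'b::ring_1 \<Rightarrow> 'b) \<Rightarrow> ('b \<Rightarrow> 'b) \<Rightarrow> bool" where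
  "alg_hom sc f \<longleftrightarrow>
     (\<forall>x y. f (x + y) = f x + f y) \<and> (\<forall>x y. f (x * y) = f x * f y) \<and> f 1 = 1 \<and>
     (\<forall>a x. f (sc a x) = sc a (f x))"

text \<open>Simple algebra: the only two-sided ideals are 0 and B (B nonzero since 'b is ring_1).\<close>
definition simple_algebra :: "('k::field \<Rightarrow> 'b::ring_1 \<Rightarrow> 'b) \<Rightarrow> bool" where
  "simple_algebra sc \<longleftrightarrow>
     (\<forall>I::'b set. (0 \<in> I \<and> (\<forall>x\<in>I. \<forall>y\<in>I. x - y \<in> I) \<and> (\<forall>x\<in>I. \<forall>a. sc a x \<in> I) \<and>
                 (\<forall>x\<in>I. \<forall>b. b * x \<in> I \<and> x * b \<in> I))
               \<longrightarrow> I = {0} \<or> I = UNIV)"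

definition S_algebra :: "'g monoid \<Rightarrow> 'g set \<Rightarrow> ('k::field \<Rightarrow> 'b::ring_1 \<Rightarrow> 'b) \<Rightarrow> ('g \<Rightarrow> 'b \<Rightarrow> 'b) \<Rightarrow> bool" where
  "S_algebra G S sc act \<longleftrightarrow> k_algebra sc \<and>
     (\<forall>s\<in>S. bij (act s) \<and> alg_hom sc (act s)) \<and> act \<one>\<^bsub>G\<^esub> = id \<and>
     (\<forall>s\<in>S. \<forall>t\<in>S. act (s \<otimes>\<^bsub>G\<^esub> t) = act s \<circ> act t)"

section \<open>Tensor product B \<otimes>_k B as free vector space on B x B modulo bilinearity\<close>

definition tensor_free :: "('b \<times> 'b \<Rightarrow> 'k::field) set" where
  "tensor_free = {c. finite {p. c p \<noteq> 0}}"

definition delta :: "'b \<times> 'b \<Rightarrow> 'b \<times> 'b \<Rightarrow> 'k::field" where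
  "delta p = (\<lambda>q. if q = p then 1 else 0)"

inductive_set tensor_rel :: "('k::field \<Rightarrow> 'b::ring_1 \<Rightarrow> 'b) \<Rightarrow> ('b \<times> 'b \<Rightarrow> 'k) set"
  for sc :: "'k::field \<Rightarrow> 'b::ring_1 \<Rightarrow> 'b" where
  zero: "(\<lambda>_. 0) \<in> tensor_rel sc"
| add: "c \<in> tensor_rel sc \<Longrightarrow> d \<in> tensor_rel sc \<Longrightarrow> (\<lambda>p. c p + d p) \<in> tensor_rel sc"
| smult: "c \<in> tensor_rel sc \<Longrightarrow> (\<lambda>p. a * c p) \<in> tensor_rel sc"
| gen1: "(\<lambda>q. delta (x + x', y) q - delta (x, y) q - delta (x', y) q) \<in> tensor_rel sc"
| gen2: "(\<lambda>q. delta (x, y + y') q - delta (x, y) q - delta (x, y') q) \<in> tensor_rel sc"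
| gen3: "(\<lambda>q. delta (sc a x, y) q - a * delta (x, y) q) \<in> tensor_rel sc"
| gen4: "(\<lambda>q. delta (x, sc a y) q - a * delta (x, y) q) \<in> tensor_rel sc"

text \<open>The map (free space on B x B) \<rightarrow> \<Prod>_{s\<in>S} B, (x,y) \<mapsto> (x (s.y))_s, extended linearly.
  Elements of \<Prod>_{s\<in>S} B are functions 'g \<Rightarrow> 'b vanishing outside S.\<close>
definition galois_map :: "'g set \<Rightarrow> ('k::field \<Rightarrow> 'b::ring_1 \<Rightarrow> 'b) \<Rightarrow> ('g \<Rightarrow> 'b \<Rightarrow> 'b)
    \<Rightarrow> ('b \<times> 'b \<Rightarrow> 'k) \<Rightarrow> 'g \<Rightarrow> 'b" where
  "galois_map S sc act c =
     (\<lambda>s. if s \<in> S then (\<Sum>p\<in>{p. c p \<noteq> 0}. sc (c p) (fst p * act s (snd p))) else 0)"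

text \<open>The induced map B \<otimes>_k B = free / rel \<rightarrow> \<Prod>_S B is bijective.\<close>
definition galois_bij :: "'g set \<Rightarrow> ('k::field \<Rightarrow> 'b::ring_1 \<Rightarrow> 'b) \<Rightarrow> ('g \<Rightarrow> 'b \<Rightarrow> 'b) \<Rightarrow> bool" where
  "galois_bij S sc act \<longleftrightarrow>
     (\<forall>c\<in>tensor_free. galois_map S sc act c = (\<lambda>_. 0) \<longleftrightarrow> c \<in> tensor_rel sc) \<and>
     galois_map S sc act ` tensor_free = {f. \<forall>s. s \<notin> S \<longrightarrow> f s = 0}"

definition galois_algebra :: "'g monoid \<Rightarrow> 'g set \<Rightarrow> ('k::field \<Rightarrow> 'b::ring_1 \<Rightarrow> 'b) \<Rightarrow> ('g \<Rightarrow> 'b \<Rightarrow> 'b) \<Rightarrow> bool" where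
  "galois_algebra G S sc act \<longleftrightarrow> S_algebra G S sc act \<and>
     {b. \<forall>s\<in>S. act s b = b} = range (\<lambda>a. sc a 1) \<and>
     galois_bij S sc act"

text \<open>Functions G \<rightarrow> B are represented as functions 'g \<Rightarrow> 'b that vanish outside carrier G.\<close>
definition ind_carrier :: "'g monoid \<Rightarrow> 'g set \<Rightarrow> ('g \<Rightarrow> 'b::ring_1 \<Rightarrow> 'b) \<Rightarrow> ('g \<Rightarrow> 'b) set" where
  "ind_carrier G S act = {r. (\<forall>x. x \<notin> carrier G \<longrightarrow> r x = 0) \<and>
      (\<forall>s\<in>S. \<forall>g\<in>carrier G. r (s \<otimes>\<^bsub>G\<^esub> g) = act s (r g))}"

definition ind_one :: "'g monoid \<Rightarrow> 'g \<Rightarrow> 'b::ring_1" where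
  "ind_one G = (\<lambda>x. if x \<in> carrier G then 1 else 0)"

definition ind_act :: "'g monoid \<Rightarrow> 'g \<Rightarrow> ('g \<Rightarrow> 'b::ring_1) \<Rightarrow> 'g \<Rightarrow> 'b" where
  "ind_act G g r = (\<lambda>x. if x \<in> carrier G then r (x \<otimes>\<^bsub>G\<^esub> g) else 0)"

definition AutS :: "'g set \<Rightarrow> ('k::field \<Rightarrow> 'b::ring_1 \<Rightarrow> 'b) \<Rightarrow> ('g \<Rightarrow> 'b \<Rightarrow> 'b) \<Rightarrow> ('b \<Rightarrow> 'b) set" where
  "AutS S sc act = {f. bij f \<and> alg_hom sc f \<and> (\<forall>s\<in>S. \<forall>b. f (act s b) = act s (f b))}"

definition AutS_group :: "'g set \<Rightarrow> ('k::field \<Rightarrow> 'b::ring_1 \<Rightarrow> 'b) \<Rightarrow> ('g \<Rightarrow> 'b \<Rightarrow> 'b) \<Rightarrow> ('b \<Rightarrow> 'b) monoid" where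
  "AutS_group S sc act = \<lparr>carrier = AutS S sc act, monoid.mult = (\<circ>), one = id\<rparr>"

definition AutG :: "'g monoid \<Rightarrow> 'g set \<Rightarrow> ('k::field \<Rightarrow> 'b::ring_1 \<Rightarrow> 'b) \<Rightarrow> ('g \<Rightarrow> 'b \<Rightarrow> 'b)
    \<Rightarrow> (('g \<Rightarrow> 'b) \<Rightarrow> ('g \<Rightarrow> 'b)) set" where
  "AutG G S sc act = (let I = ind_carrier G S act in
     {F. F \<in> extensional I \<and> bij_betw F I I \<and>
         (\<forall>r\<in>I. \<forall>r'\<in>I. F (\<lambda>x. r x + r' x) = (\<lambda>x. F r x + F r' x)) \<and>
         (\<forall>r\<in>I. \<forall>r'\<in>I. F (\<lambda>x. r x * r' x) = (\<lambda>x. F r x * F r' x)) \<and>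
         F (ind_one G) = ind_one G \<and>
         (\<forall>a. \<forall>r\<in>I. F (\<lambda>x. sc a (r x)) = (\<lambda>x. sc a (F r x))) \<and>
         (\<forall>g\<in>carrier G. \<forall>r\<in>I. F (ind_act G g r) = ind_act G g (F r))})"

definition AutG_group :: "'g monoid \<Rightarrow> 'g set \<Rightarrow> ('k::field \<Rightarrow> 'b::ring_1 \<Rightarrow> 'b) \<Rightarrow> ('g \<Rightarrow> 'b \<Rightarrow> 'b)
    \<Rightarrow> (('g \<Rightarrow> 'b) \<Rightarrow> ('g \<Rightarrow> 'b)) monoid" where
  "AutG_group G S sc act = \<lparr>carrier = AutG G S sc act,
      monoid.mult = (\<lambda>F F'. restrict (F \<circ> F') (ind_carrier G S act)),
      one = restrict id (ind_carrier G S act)\<rparr>"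

definition ind_map :: "'g monoid \<Rightarrow> 'g set \<Rightarrow> ('g \<Rightarrow> 'b::ring_1 \<Rightarrow> 'b) \<Rightarrow> ('b \<Rightarrow> 'b)
    \<Rightarrow> ('g \<Rightarrow> 'b) \<Rightarrow> ('g \<Rightarrow> 'b)" where
  "ind_map G S act f = restrict (\<lambda>r. f \<circ> r) (ind_carrier G S act)"

definition chi :: "'g set \<Rightarrow> 'g \<Rightarrow> 'b::ring_1" where
  "chi C = (\<lambda>x. if x \<in> C then 1 else 0)"

definition pi_map :: "'g monoid \<Rightarrow> 'g set \<Rightarrow> (('g \<Rightarrow> 'b::ring_1) \<Rightarrow> ('g \<Rightarrow> 'b)) \<Rightarrow> 'g set" where
  "pi_map G S F = (THE C. C \<in> rcosets\<^bsub>G\<^esub> S \<and> F (chi S) = chi C)"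

definition normalizer_quot :: "'g monoid \<Rightarrow> 'g set \<Rightarrow> 'g set monoid" where
  "normalizer_quot G S = (G\<lparr>carrier := normalizer G S\<rparr>) Mod S"

definition iso_twist :: "'g monoid \<Rightarrow> 'g set \<Rightarrow> ('k::field \<Rightarrow> 'b::ring_1 \<Rightarrow> 'b) \<Rightarrow> ('g \<Rightarrow> 'b \<Rightarrow> 'b) \<Rightarrow> 'g \<Rightarrow> bool" where
  "iso_twist G S sc act g \<longleftrightarrow> (\<exists>\<phi>. bij \<phi> \<and> alg_hom sc \<phi> \<and>
     (\<forall>s\<in>S. \<forall>b. \<phi> (act s b) = act (g \<otimes>\<^bsub>G\<^esub> s \<otimes>\<^bsub>G\<^esub> inv\<^bsub>G\<^esub> g) (\<phi> b)))"

end

theory Submission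
  imports Defs
begin

lemma alg_hom_add: "alg_hom sc f \<Longrightarrow> f (x + y) = f x + f y" by (simp add: alg_hom_def)
lemma alg_hom_mult: "alg_hom sc f \<Longrightarrow> f (x * y) = f x * f y" by (simp add: alg_hom_def)
lemma alg_hom_1: "alg_hom sc f \<Longrightarrow> f 1 = 1" by (simp add: alg_hom_def)
lemma alg_hom_sc: "alg_hom sc f \<Longrightarrow> f (sc a x) = sc a (f x)" by (simp add: alg_hom_def)
lemma alg_hom_0: "alg_hom sc f \<Longrightarrow> f 0 = 0"
proof -
  assume a: "alg_hom sc f"
  have "f (0 + 0) = f 0 + f 0" using alg_hom_add[OF a] .
  thus ?thesis by simp
qed
lemma alg_hom_diff: "alg_hom sc f \<Longrightarrow> f (x - y) = f x - f y"
proof -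
  assume a: "alg_hom sc f"
  have "f ((x - y) + y) = f (x - y) + f y" using alg_hom_add[OF a] .
  thus ?thesis by (simp add: algebra_simps)
qed
lemma alg_hom_inv:
  assumes "bij f" "alg_hom sc f" shows "alg_hom sc (inv_into UNIV f)"
proof -
  have fi: "\<And>x. f (inv_into UNIV f x) = x" using assms(1) by (simp add: bij_is_surj surj_f_inv_f)
  have if': "\<And>x. inv_into UNIV f (f x) = x" using assms(1) by (simp add: bij_is_inj)
  show ?thesis unfolding alg_hom_def
  proof (intro conjI allI)
    fix x y
    show "inv_into UNIV f (x + y) = inv_into UNIV f x + inv_into UNIV f y"
      by (metis fi if' alg_hom_add[OF assms(2)])
    show "inv_into UNIV f (x * y) = inv_into UNIV f x * inv_into UNIV f y"
      by (metis fi if' alg_hom_mult[OF assms(2)])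
  next
    show "inv_into UNIV f 1 = 1" by (metis if' alg_hom_1[OF assms(2)])
  next
    fix a x show "inv_into UNIV f (sc a x) = sc a (inv_into UNIV f x)"
      by (metis fi if' alg_hom_sc[OF assms(2)])
  qed
qed

lemma sc_zero: "k_algebra sc \<Longrightarrow> sc a 0 = 0"
proof -
  assume k: "k_algebra sc"
  have "sc a (0 + 0) = sc a 0 + sc a 0" using k unfolding k_algebra_def by blast
  thus ?thesis by simp
qed

lemma simple_central_idem:
  fixes sc :: "'k::field \<Rightarrow> 'b::ring_1 \<Rightarrow> 'b"
  assumes k: "k_algebra sc" and s: "simple_algebra sc"
    and idem: "e * e = e" and cen: "\<And>b. e * b = b * e"
  shows "e = 0 \<or> e = (1::'b::ring_1)"
proof -
  let ?J = "range (\<lambda>b. b * e)"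
  have "?J = {0} \<or> ?J = UNIV"
    using s[unfolded simple_algebra_def, rule_format, of ?J]
  proof
    show "0 \<in> ?J \<and> (\<forall>x\<in>?J. \<forall>y\<in>?J. x - y \<in> ?J) \<and> (\<forall>x\<in>?J. \<forall>a. sc a x \<in> ?J) \<and>
      (\<forall>x\<in>?J. \<forall>b. b * x \<in> ?J \<and> x * b \<in> ?J)"
    proof (intro conjI ballI allI)
      show "0 \<in> ?J" by (rule range_eqI[of _ _ 0]) simp
    next
      fix x y assume "x \<in> ?J" "y \<in> ?J"
      then obtain b c where "x = b * e" "y = c * e" by auto
      thus "x - y \<in> ?J" by (auto intro: range_eqI[of _ _ "b - c"] simp: algebra_simps)
    next
      fix x a assume "x \<in> ?J"
      then obtain b where "x = b * e" by auto
      thus "sc a x \<in> ?J" using k by (auto intro: range_eqI[of _ _ "sc a b"] simp: k_algebra_def)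
    next
      fix x b assume "x \<in> ?J"
      then obtain c where "x = c * e" by auto
      thus "b * x \<in> ?J" by (auto intro: range_eqI[of _ _ "b * c"] simp: mult.assoc)
    next
      fix x b assume "x \<in> ?J"
      then obtain c where c: "x = c * e" by auto
      have "x * b = (c * b) * e" unfolding c by (simp add: mult.assoc cen)
      thus "x * b \<in> ?J" by auto
    qed
  qed auto
  thus ?thesis
  proof
    assume "?J = {0}" hence "1 * e = 0" by blast
    thus ?thesis by simp
  next
    assume "?J = UNIV" hence "1 \<in> ?J" by blast
    then obtain b where b: "1 = b * e" by auto
    have "e = b * e * e" using b by simp
    also have "\<dots> = b * e" by (simp add: mult.assoc idem)
    finally show ?thesis using b by simp
  qed
qed


lemma chi_inj: fixes C D :: "'g set" assumes "chi C = (chi D :: 'g \<Rightarrow> 'b::ring_1)" shows "C = D"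
proof -
  have "x \<in> C \<longleftrightarrow> x \<in> D" for x
    using fun_cong[OF assms, of x] by (simp add: chi_def split: if_splits)
  thus ?thesis by blast
qed

locale P3 = group G for G :: "'g monoid" (structure) +
  fixes S :: "'g set" and sc :: "'k::field \<Rightarrow> 'b::ring_1 \<Rightarrow> 'b" and act :: "'g \<Rightarrow> 'b \<Rightarrow> 'b"
  assumes finG: "finite (carrier G)" and subS: "subgroup S G"
    and salg: "S_algebra G S sc act" and simpl: "simple_algebra sc"
begin

abbreviation "I \<equiv> ind_carrier G S act"

lemma kalg: "k_algebra sc" using salg unfolding S_algebra_def by (elim conjE)
lemma Ssub: "S \<subseteq> carrier G" using subS subgroup.subset by blast
lemma S_carr[simp]: "s \<in> S \<Longrightarrow> s \<in> carrier G" using Ssub by (rule subsetD)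
lemma one_S[simp]: "\<one> \<in> S" by (rule subgroup.one_closed[OF subS])
lemma S_mult[simp]: "s \<in> S \<Longrightarrow> t \<in> S \<Longrightarrow> s \<otimes> t \<in> S" by (rule subgroup.m_closed[OF subS])
lemma S_inv[simp]: "s \<in> S \<Longrightarrow> inv\<^bsub>G\<^esub> s \<in> S" using subgroup.m_inv_closed[OF subS] by blast
lemma act_hb: "\<forall>s\<in>S. bij (act s) \<and> alg_hom sc (act s)" using salg unfolding S_algebra_def by (elim conjE)
lemma act_hom: "s \<in> S \<Longrightarrow> alg_hom sc (act s)" using act_hb by blast
lemma act_bij: "s \<in> S \<Longrightarrow> bij (act s)" using act_hb by blast
lemma act_one[simp]: "act \<one> b = b"
proof -
  have "act \<one> = id" using salg unfolding S_algebra_def by (elim conjE)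
  thus ?thesis by simp
qed
lemma act_mult: "s \<in> S \<Longrightarrow> t \<in> S \<Longrightarrow> act (s \<otimes> t) b = act s (act t b)"
proof -
  assume "s \<in> S" "t \<in> S"
  moreover have "\<forall>s\<in>S. \<forall>t\<in>S. act (s \<otimes> t) = act s \<circ> act t" using salg unfolding S_algebra_def by (elim conjE)
  ultimately show ?thesis by simp
qed
lemma act_0[simp]: "s \<in> S \<Longrightarrow> act s 0 = 0" using act_hom alg_hom_0 by blast
lemma act_1[simp]: "s \<in> S \<Longrightarrow> act s 1 = 1" using act_hom alg_hom_1 by blast
lemma act_add: "s \<in> S \<Longrightarrow> act s (x + y) = act s x + act s y" using act_hom alg_hom_add by blast
lemma act_times: "s \<in> S \<Longrightarrow> act s (x * y) = act s x * act s y" using act_hom alg_hom_mult by blast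
lemma act_sc: "s \<in> S \<Longrightarrow> act s (sc a x) = sc a (act s x)" using act_hom alg_hom_sc by blast
lemma sc_0[simp]: "sc a 0 = 0" using sc_zero kalg by blast

lemma I_iff: "r \<in> I \<longleftrightarrow> (\<forall>x. x \<notin> carrier G \<longrightarrow> r x = 0) \<and>
    (\<forall>s\<in>S. \<forall>g\<in>carrier G. r (s \<otimes> g) = act s (r g))"
  unfolding ind_carrier_def by simp
lemma I_out: "r \<in> I \<Longrightarrow> x \<notin> carrier G \<Longrightarrow> r x = 0" using I_iff by blast
lemma I_eq: "r \<in> I \<Longrightarrow> s \<in> S \<Longrightarrow> g \<in> carrier G \<Longrightarrow> r (s \<otimes> g) = act s (r g)"
  using I_iff by blast
lemma I_intro: "(\<And>x. x \<notin> carrier G \<Longrightarrow> r x = 0) \<Longrightarrow>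
    (\<And>s g. s \<in> S \<Longrightarrow> g \<in> carrier G \<Longrightarrow> r (s \<otimes> g) = act s (r g)) \<Longrightarrow> r \<in> I"
  using I_iff by blast

lemma zero_I: "(\<lambda>x. 0) \<in> I" by (rule I_intro) auto
lemma add_I: "r \<in> I \<Longrightarrow> r' \<in> I \<Longrightarrow> (\<lambda>x. r x + r' x) \<in> I"
  by (rule I_intro) (auto simp: I_out I_eq act_add)
lemma mult_I: "r \<in> I \<Longrightarrow> r' \<in> I \<Longrightarrow> (\<lambda>x. r x * r' x) \<in> I"
  by (rule I_intro) (auto simp: I_out I_eq act_times)
lemma sc_I: "r \<in> I \<Longrightarrow> (\<lambda>x. sc a (r x)) \<in> I"
  by (rule I_intro) (auto simp: I_out I_eq act_sc)
lemma ind_act_I: "g \<in> carrier G \<Longrightarrow> r \<in> I \<Longrightarrow> ind_act G g r \<in> I"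
proof (rule I_intro)
  fix x assume "x \<notin> carrier G" thus "ind_act G g r x = 0" by (simp add: ind_act_def)
next
  fix s y assume g: "g \<in> carrier G" and r: "r \<in> I" and s: "s \<in> S" and y: "y \<in> carrier G"
  have "ind_act G g r (s \<otimes> y) = r (s \<otimes> (y \<otimes> g))" using g s y by (simp add: ind_act_def m_assoc)
  also have "\<dots> = act s (r (y \<otimes> g))" using I_eq[OF r s] g y by simp
  finally show "ind_act G g r (s \<otimes> y) = act s (ind_act G g r y)" using y by (simp add: ind_act_def)
qed

lemma ind_one_I: "ind_one G \<in> I"
  by (rule I_intro) (auto simp: ind_one_def)

lemma rcos_iff: "x \<in> carrier G \<Longrightarrow> g \<in> carrier G \<Longrightarrow> (x \<in> S #> g) = (x \<otimes> inv g \<in> S)"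
  using subgroup.rcos_module[OF subS is_group] by blast
lemma rcos_carr: "x \<in> S #> g \<Longrightarrow> g \<in> carrier G \<Longrightarrow> x \<in> carrier G"
  using r_coset_subset_G[OF Ssub] by blast

lemma S_left_iff: "s \<in> S \<Longrightarrow> y \<in> carrier G \<Longrightarrow> (s \<otimes> y \<in> S) = (y \<in> S)"
proof
  assume "s \<in> S" "y \<in> carrier G" "s \<otimes> y \<in> S"
  hence "inv s \<otimes> (s \<otimes> y) \<in> S" by simp
  thus "y \<in> S" using \<open>s \<in> S\<close> \<open>y \<in> carrier G\<close> by (simp add: m_assoc[symmetric])
qed simp

lemma S_right_iff: "s \<in> S \<Longrightarrow> y \<in> carrier G \<Longrightarrow> (y \<otimes> s \<in> S) = (y \<in> S)"
proof
  assume "s \<in> S" "y \<in> carrier G" "y \<otimes> s \<in> S"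
  hence "(y \<otimes> s) \<otimes> inv s \<in> S" by simp
  thus "y \<in> S" using \<open>s \<in> S\<close> \<open>y \<in> carrier G\<close> by (simp add: m_assoc)
qed simp

lemma chi_I: "g \<in> carrier G \<Longrightarrow> chi (S #> g) \<in> I"
proof (rule I_intro)
  fix x assume "g \<in> carrier G" "x \<notin> carrier G"
  thus "chi (S #> g) x = 0" using rcos_carr unfolding chi_def by auto
next
  fix s y assume g: "g \<in> carrier G" and s: "s \<in> S" and y: "y \<in> carrier G"
  have "(s \<otimes> y \<in> S #> g) = (y \<in> S #> g)"
    using g s y by (simp add: rcos_iff m_assoc S_left_iff)
  thus "chi (S #> g) (s \<otimes> y) = act s (chi (S #> g) y)"
    using s unfolding chi_def by auto
qed

lemma chiS_eq: "chi S = chi (S #> \<one>)" using Ssub by simp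
lemma chiS_I: "chi S \<in> I" by (subst chiS_eq) (rule chi_I[OF one_closed])

definition rr :: "'g \<Rightarrow> 'b \<Rightarrow> 'g \<Rightarrow> 'b" where
  "rr x b = (\<lambda>y. if y \<in> carrier G \<and> y \<otimes> inv x \<in> S then act (y \<otimes> inv x) b else 0)"

lemma rr_I: "x \<in> carrier G \<Longrightarrow> rr x b \<in> I"
proof (rule I_intro)
  fix y assume "y \<notin> carrier G" thus "rr x b y = 0" unfolding rr_def by simp
next
  fix s y assume x: "x \<in> carrier G" and s: "s \<in> S" and y: "y \<in> carrier G"
  have e: "s \<otimes> y \<otimes> inv x = s \<otimes> (y \<otimes> inv x)" using x s y by (simp add: m_assoc)
  show "rr x b (s \<otimes> y) = act s (rr x b y)"
    unfolding rr_def using x s y by (auto simp: e S_left_iff act_mult)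
qed

lemma rr_at[simp]: "x \<in> carrier G \<Longrightarrow> rr x b x = b" unfolding rr_def by simp
lemma rr_supp: "x \<in> carrier G \<Longrightarrow> y \<notin> S #> x \<Longrightarrow> rr x b y = 0"
  unfolding rr_def using rcos_iff by auto




lemma conj_set_eq: "g \<in> carrier G \<Longrightarrow> g <# S #> inv g = (\<lambda>t. g \<otimes> t \<otimes> inv g) ` S"
  unfolding l_coset_def r_coset_def by auto

lemma N_iff: "g \<in> normalizer G S \<longleftrightarrow> g \<in> carrier G \<and> g <# S #> inv g = S"
  unfolding normalizer_def stabilizer_def using Ssub by auto

lemma N_conj: "g \<in> normalizer G S \<Longrightarrow> t \<in> S \<Longrightarrow> g \<otimes> t \<otimes> inv g \<in> S"
  using N_iff conj_set_eq by (metis imageI)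

lemma N_carr: "g \<in> normalizer G S \<Longrightarrow> g \<in> carrier G" using N_iff by blast

lemma N_sub: "subgroup (normalizer G S) G" using normalizer_imp_subgroup[OF Ssub] .

lemma N_inv: "g \<in> normalizer G S \<Longrightarrow> inv g \<in> normalizer G S"
  using subgroup.m_inv_closed[OF N_sub] by blast

lemma N_conj': "g \<in> normalizer G S \<Longrightarrow> t \<in> S \<Longrightarrow> inv g \<otimes> t \<otimes> g \<in> S"
  using N_conj[OF N_inv, of g t] N_carr[of g] by simp

lemma N_intro:
  assumes g: "g \<in> carrier G" and c: "\<And>t. t \<in> S \<Longrightarrow> g \<otimes> t \<otimes> inv g \<in> S"
  shows "g \<in> normalizer G S"
proof -
  have fin: "finite S" using finG Ssub finite_subset by blast
  have sub: "(\<lambda>t. g \<otimes> t \<otimes> inv g) ` S \<subseteq> S" using c by blast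
  have inj: "inj_on (\<lambda>t. g \<otimes> t \<otimes> inv g) S"
  proof (rule inj_onI)
    fix x y assume x: "x \<in> S" and y: "y \<in> S" and e: "g \<otimes> x \<otimes> inv g = g \<otimes> y \<otimes> inv g"
    have "g \<otimes> x = g \<otimes> y" using e x y g by (simp add: r_cancel[symmetric])
    thus "x = y" using x y g by simp
  qed
  have "(\<lambda>t. g \<otimes> t \<otimes> inv g) ` S = S" using endo_inj_surj[OF fin sub inj] .
  thus ?thesis using N_iff conj_set_eq g by simp
qed

lemma rcos_obtain: "y \<in> S #> g \<Longrightarrow> \<exists>s\<in>S. y = s \<otimes> g"
  unfolding r_coset_def by auto

lemma chi_idem: "(\<lambda>x. chi C x * chi C x) = (chi C :: 'g \<Rightarrow> 'b)"
  by (auto simp: chi_def)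
lemma chi_comm: "(\<lambda>x. chi C x * r x) = (\<lambda>x. r x * (chi C x :: 'b))"
  by (auto simp: chi_def)
lemma chi_one_iff: "(chi C x = (1::'b)) = (x \<in> C)" by (simp add: chi_def)
lemma chi_zero_iff: "(chi C x = (0::'b)) = (x \<notin> C)" by (simp add: chi_def)
abbreviation "A \<equiv> AutG G S sc act"

lemma AutG_iff: "F \<in> A \<longleftrightarrow> F \<in> extensional I \<and> bij_betw F I I \<and>
         (\<forall>r\<in>I. \<forall>r'\<in>I. F (\<lambda>x. r x + r' x) = (\<lambda>x. F r x + F r' x)) \<and>
         (\<forall>r\<in>I. \<forall>r'\<in>I. F (\<lambda>x. r x * r' x) = (\<lambda>x. F r x * F r' x)) \<and>
         F (ind_one G) = ind_one G \<and>
         (\<forall>a. \<forall>r\<in>I. F (\<lambda>x. sc a (r x)) = (\<lambda>x. sc a (F r x))) \<and>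
         (\<forall>g\<in>carrier G. \<forall>r\<in>I. F (ind_act G g r) = ind_act G g (F r))"
  unfolding AutG_def Let_def by (rule mem_Collect_eq)

context fixes F assumes FA: "F \<in> A"
begin
lemma F_ext: "F \<in> extensional I" using FA AutG_iff by blast
lemma F_bij: "bij_betw F I I" using FA AutG_iff by blast
lemma F_I: "r \<in> I \<Longrightarrow> F r \<in> I" using F_bij bij_betwE by blast
lemma F_inj: "r \<in> I \<Longrightarrow> r' \<in> I \<Longrightarrow> F r = F r' \<Longrightarrow> r = r'"
  using F_bij bij_betw_imp_inj_on inj_onD by metis
lemma F_surj: "r \<in> I \<Longrightarrow> \<exists>d\<in>I. F d = r"
  using F_bij bij_betw_imp_surj_on by (metis imageE)
lemma F_add: "r \<in> I \<Longrightarrow> r' \<in> I \<Longrightarrow> F (\<lambda>x. r x + r' x) = (\<lambda>x. F r x + F r' x)"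
  using FA AutG_iff by blast
lemma F_mult: "r \<in> I \<Longrightarrow> r' \<in> I \<Longrightarrow> F (\<lambda>x. r x * r' x) = (\<lambda>x. F r x * F r' x)"
  using FA AutG_iff by blast
lemma F_one: "F (ind_one G) = ind_one G"
  using FA AutG_iff by blast
lemma F_sc: "r \<in> I \<Longrightarrow> F (\<lambda>x. sc a (r x)) = (\<lambda>x. sc a (F r x))"
  using FA AutG_iff by blast
lemma F_act: "g \<in> carrier G \<Longrightarrow> r \<in> I \<Longrightarrow> F (ind_act G g r) = ind_act G g (F r)"
  using FA AutG_iff by blast
lemma F_zero: "F (\<lambda>x. 0) = (\<lambda>x. 0)"
proof -
  have "F (\<lambda>x. (0::'b) + 0) = (\<lambda>x. F (\<lambda>x. 0) x + F (\<lambda>x. 0) x)" using F_add[OF zero_I zero_I] .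
  hence "\<And>x. F (\<lambda>x. 0) x = F (\<lambda>x. 0) x + F (\<lambda>x. 0) x" by (metis add_0)
  thus ?thesis by (simp add: fun_eq_iff)
qed
end

lemma ci_01:
  assumes eI: "e \<in> I" and idem: "(\<lambda>x. e x * e x) = e"
    and cen: "\<And>r. r \<in> I \<Longrightarrow> (\<lambda>x. e x * r x) = (\<lambda>x. r x * e x)"
    and x: "x \<in> carrier G"
  shows "e x = 0 \<or> e x = 1"
proof (rule simple_central_idem[OF kalg simpl])
  show "e x * e x = e x" using fun_cong[OF idem, of x] by simp
  fix b
  show "e x * b = b * e x" using fun_cong[OF cen[OF rr_I[OF x, of b]], of x] x by simp
qed

lemma lemmaB1:
  assumes FA: "F \<in> A"
  shows "\<exists>g\<in>carrier G. F (chi S) = chi (S #> g)"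
proof -
  define e where "e = F (chi S)"
  have eI: "e \<in> I" unfolding e_def using F_I[OF FA chiS_I] .
  have eidem: "(\<lambda>x. e x * e x) = e"
  proof -
    have "(\<lambda>x. e x * e x) = F (\<lambda>x. chi S x * chi S x)" unfolding e_def using F_mult[OF FA chiS_I chiS_I] by simp
    also have "\<dots> = e" unfolding e_def by (simp only: chi_idem)
    finally show ?thesis .
  qed
  have ecen: "(\<lambda>x. e x * r x) = (\<lambda>x. r x * e x)" if r: "r \<in> I" for r
  proof -
    obtain d where d: "d \<in> I" "F d = r" using F_surj[OF FA r] by blast
    have "(\<lambda>x. e x * r x) = F (\<lambda>x. chi S x * d x)" unfolding e_def using F_mult[OF FA chiS_I d(1)] d(2) by simp
    also have "\<dots> = F (\<lambda>x. d x * chi S x)" by (simp add: chi_comm)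
    also have "\<dots> = (\<lambda>x. r x * e x)" unfolding e_def using F_mult[OF FA d(1) chiS_I] d(2) by simp
    finally show ?thesis .
  qed
  have e01: "e x = 0 \<or> e x = 1" if "x \<in> carrier G" for x using ci_01[OF eI eidem ecen that] by blast
  have "e \<noteq> (\<lambda>x. 0)"
  proof
    assume "e = (\<lambda>x. 0)"
    hence "F (chi S) = F (\<lambda>x. 0)" unfolding e_def using F_zero[OF FA] by simp
    hence "chi S = (\<lambda>x. (0::'b))" using F_inj[OF FA chiS_I zero_I] by blast
    hence "chi S \<one> = (0::'b)" by simp
    thus False by (simp add: chi_def)
  qed
  then obtain g where "e g \<noteq> 0" by auto
  hence g: "g \<in> carrier G" using I_out[OF eI] by blast
  hence eg: "e g = 1" using e01 \<open>e g \<noteq> 0\<close> by blast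
  have eSg: "e y = 1" if yS: "y \<in> S #> g" for y
  proof -
    obtain s where s: "s \<in> S" "y = s \<otimes> g" using rcos_obtain[OF yS] by blast
    have "e (s \<otimes> g) = act s (e g)" using I_eq[OF eI s(1) g] .
    thus ?thesis using s eg by simp
  qed
  have chiSg_e: "(\<lambda>x. chi (S #> g) x * e x) = chi (S #> g)"
    by (rule ext) (simp add: chi_def eSg)
  obtain d where dI: "d \<in> I" and Fd: "F d = chi (S #> g)" using F_surj[OF FA chi_I[OF g]] by blast
  have didem: "(\<lambda>x. d x * d x) = d"
  proof (rule F_inj[OF FA mult_I[OF dI dI] dI])
    have "F (\<lambda>x. d x * d x) = (\<lambda>x. chi (S #> g) x * chi (S #> g) x)" using F_mult[OF FA dI dI] Fd by simp
    also have "\<dots> = F d" using Fd by (simp only: chi_idem)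
    finally show "F (\<lambda>x. d x * d x) = F d" .
  qed
  have dcen: "(\<lambda>x. d x * r x) = (\<lambda>x. r x * d x)" if r: "r \<in> I" for r
  proof (rule F_inj[OF FA mult_I[OF dI r] mult_I[OF r dI]])
    have "F (\<lambda>x. d x * r x) = (\<lambda>x. chi (S #> g) x * F r x)" using F_mult[OF FA dI r] Fd by simp
    also have "\<dots> = (\<lambda>x. F r x * chi (S #> g) x)" by (simp only: chi_comm)
    also have "\<dots> = F (\<lambda>x. r x * d x)" using F_mult[OF FA r dI] Fd by simp
    finally show "F (\<lambda>x. d x * r x) = F (\<lambda>x. r x * d x)" .
  qed
  have d01: "d x = 0 \<or> d x = 1" if "x \<in> carrier G" for x using ci_01[OF dI didem dcen that] by blast
  have dchi: "(\<lambda>x. d x * chi S x) = d"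
  proof (rule F_inj[OF FA mult_I[OF dI chiS_I] dI])
    have "F (\<lambda>x. d x * chi S x) = (\<lambda>x. chi (S #> g) x * e x)" using F_mult[OF FA dI chiS_I] Fd e_def by simp
    thus "F (\<lambda>x. d x * chi S x) = F d" using chiSg_e Fd by simp
  qed
  have "d \<noteq> (\<lambda>x. 0)"
  proof
    assume "d = (\<lambda>x. 0)"
    hence "chi (S #> g) = (\<lambda>x. (0::'b))" using Fd F_zero[OF FA] by simp
    hence "chi (S #> g) g = (0::'b)" by simp
    thus False using rcos_self[OF g subS] by (simp add: chi_def)
  qed
  then obtain y where "d y \<noteq> 0" by auto
  hence y: "y \<in> carrier G" using I_out[OF dI] by blast
  hence dy: "d y = 1" using d01 \<open>d y \<noteq> 0\<close> by blast
  have yS: "y \<in> S"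
  proof (rule ccontr)
    assume "y \<notin> S"
    hence "d y * chi S y = 0" by (simp add: chi_def)
    thus False using fun_cong[OF dchi, of y] dy by simp
  qed
  have "d = chi S"
  proof
    fix z show "d z = chi S z"
    proof (cases "z \<in> S")
      case True
      have "z \<otimes> inv y \<in> S" using True yS by simp
      moreover have "z = (z \<otimes> inv y) \<otimes> y" using True y by (simp add: m_assoc)
      ultimately have "d z = act (z \<otimes> inv y) (d y)" using I_eq[OF dI _ y, of "z \<otimes> inv y"] by simp
      thus ?thesis using dy True \<open>z \<otimes> inv y \<in> S\<close> by (simp add: chi_def)
    next
      case False
      thus ?thesis using fun_cong[OF dchi, of z] by (simp add: chi_def)
    qed
  qed
  thus ?thesis using Fd g by blast
qed

lemma ind_act_chiS: "t \<in> S \<Longrightarrow> ind_act G t (chi S) = (chi S :: 'g \<Rightarrow> 'b)"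
  by (rule ext) (auto simp: ind_act_def chi_def S_right_iff)

lemma lemmaB2:
  assumes FA: "F \<in> A" and g: "g \<in> carrier G" and Fg: "F (chi S) = chi (S #> g)"
  shows "g \<in> normalizer G S"
proof (rule N_intro[OF g])
  fix t assume t: "t \<in> S"
  have "chi (S #> g) = ind_act G t (chi (S #> g) :: 'g \<Rightarrow> 'b)"
    using F_act[OF FA _ chiS_I, of t] t Fg ind_act_chiS[OF t] by simp
  from fun_cong[OF this, of g]
  have "chi (S #> g) g = (chi (S #> g) (g \<otimes> t) :: 'b)" using g by (simp add: ind_act_def)
  hence "chi (S #> g) (g \<otimes> t) = (1::'b)"
    using rcos_self[OF g subS] by (simp add: chi_def)
  hence "g \<otimes> t \<in> S #> g" by (simp add: chi_def split: if_splits)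
  thus "g \<otimes> t \<otimes> inv g \<in> S" using rcos_iff g t by simp
qed


lemma pi_eq:
  assumes g: "g \<in> carrier G" and Fg: "F (chi S) = (chi (S #> g) :: 'g \<Rightarrow> 'b)"
  shows "pi_map G S F = S #> g"
  unfolding pi_map_def
proof (rule the_equality)
  show "S #> g \<in> rcosets S \<and> F (chi S) = chi (S #> g)" using rcosetsI[OF Ssub g] Fg by blast
next
  fix C assume "C \<in> rcosets S \<and> F (chi S) = chi C"
  hence "chi C = (chi (S #> g) :: 'g \<Rightarrow> 'b)" using Fg by simp
  thus "C = S #> g" by (rule chi_inj)
qed

lemma chi_act:
  assumes a: "a \<in> carrier G" and h: "h \<in> carrier G"
  shows "ind_act G h (chi (S #> a)) = (chi (S #> (a \<otimes> inv h)) :: 'g \<Rightarrow> 'b)"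
proof
  fix x show "ind_act G h (chi (S #> a)) x = (chi (S #> (a \<otimes> inv h)) x :: 'b)"
  proof (cases "x \<in> carrier G")
    case True
    have "(x \<otimes> h \<in> S #> a) = (x \<otimes> h \<otimes> inv a \<in> S)" using rcos_iff True a h by simp
    moreover have "(x \<in> S #> (a \<otimes> inv h)) = (x \<otimes> inv (a \<otimes> inv h) \<in> S)" using rcos_iff True a h by simp
    moreover have "x \<otimes> inv (a \<otimes> inv h) = x \<otimes> h \<otimes> inv a" using True a h by (simp add: inv_mult_group m_assoc)
    ultimately show ?thesis using True by (simp add: ind_act_def chi_def)
  next
    case False
    hence "x \<notin> S #> (a \<otimes> inv h)" using rcos_carr a h by blast
    thus ?thesis using False by (simp add: ind_act_def chi_def)
  qed
qed

lemma chi_coset_act: assumes b: "b \<in> carrier G" shows "chi (S #> b) = (ind_act G (inv b) (chi S) :: 'g \<Rightarrow> 'b)"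
proof -
  have e1: "S #> \<one> = S" using Ssub by simp
  have "ind_act G (inv b) (chi (S #> \<one>)) = (chi (S #> (\<one> \<otimes> inv (inv b))) :: 'g \<Rightarrow> 'b)"
    by (rule chi_act) (use b in simp_all)
  thus ?thesis using b e1 by simp
qed

lemma NQ_carrier: "carrier (normalizer_quot G S) = (\<lambda>g. S #> g) ` normalizer G S"
  unfolding normalizer_quot_def FactGroup_def RCOSETS_def r_coset_def by auto

lemma NQ_one: "one (normalizer_quot G S) = S"
  unfolding normalizer_quot_def FactGroup_def by simp

lemma NQ_mult: "monoid.mult (normalizer_quot G S) M1 M2 = set_mult G M1 M2"
  unfolding normalizer_quot_def FactGroup_def set_mult_def by simp

lemma coset_mult_N:
  assumes a: "a \<in> normalizer G S" and b: "b \<in> carrier G"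
  shows "set_mult G (S #> a) (S #> b) = S #> (a \<otimes> b)"
proof
  have ac: "a \<in> carrier G" using N_carr[OF a] .
  show "set_mult G (S #> a) (S #> b) \<subseteq> S #> (a \<otimes> b)"
  proof
    fix z assume "z \<in> set_mult G (S #> a) (S #> b)"
    then obtain x y where x: "x \<in> S #> a" and y: "y \<in> S #> b" and z: "z = x \<otimes> y"
      unfolding set_mult_def by blast
    obtain s where s: "s \<in> S" "x = s \<otimes> a" using rcos_obtain[OF x] by blast
    obtain t where t: "t \<in> S" "y = t \<otimes> b" using rcos_obtain[OF y] by blast
    have eq: "inv a \<otimes> (a \<otimes> b) = b" using ac b by (simp add: m_assoc[symmetric])
    have "z = (s \<otimes> (a \<otimes> t \<otimes> inv a)) \<otimes> (a \<otimes> b)" using s t z ac b eq by (simp add: m_assoc)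
    moreover have "s \<otimes> (a \<otimes> t \<otimes> inv a) \<in> S" using N_conj[OF a t(1)] s(1) by simp
    ultimately show "z \<in> S #> (a \<otimes> b)" using rcosI[OF _ Ssub] ac b by simp
  qed
next
  have ac: "a \<in> carrier G" using N_carr[OF a] .
  show "S #> (a \<otimes> b) \<subseteq> set_mult G (S #> a) (S #> b)"
  proof
    fix z assume "z \<in> S #> (a \<otimes> b)"
    then obtain s where s: "s \<in> S" "z = s \<otimes> (a \<otimes> b)" using rcos_obtain by blast
    have "s \<otimes> a \<in> S #> a" using rcosI[OF s(1) Ssub ac] .
    moreover have "\<one> \<otimes> b \<in> S #> b" using rcosI[OF one_S Ssub b] .
    moreover have "z = (s \<otimes> a) \<otimes> (\<one> \<otimes> b)" using s ac b by (simp add: m_assoc)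
    ultimately show "z \<in> set_mult G (S #> a) (S #> b)" unfolding set_mult_def by blast
  qed
qed

lemma pi_hom: "pi_map G S \<in> hom (AutG_group G S sc act) (normalizer_quot G S)"
proof -
  have cA: "carrier (AutG_group G S sc act) = A" by (simp add: AutG_group_def)
  have mA: "monoid.mult (AutG_group G S sc act) F F' = restrict (F \<circ> F') I" for F F'
    by (simp add: AutG_group_def)
  have ex: "\<exists>g\<in>normalizer G S. F (chi S) = chi (S #> g) \<and> pi_map G S F = S #> g" if FA: "F \<in> A" for F
  proof -
    obtain g where g: "g \<in> carrier G" "F (chi S) = chi (S #> g)" using lemmaB1[OF FA] by blast
    thus ?thesis using lemmaB2[OF FA g(1) g(2)] pi_eq[where F=F, OF g(1) g(2)] by blast
  qed
  show ?thesis unfolding hom_def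
  proof (intro CollectI conjI ballI)
    show "pi_map G S \<in> carrier (AutG_group G S sc act) \<rightarrow> carrier (normalizer_quot G S)"
      unfolding cA NQ_carrier using ex by blast
  next
    fix F F' assume "F \<in> carrier (AutG_group G S sc act)" "F' \<in> carrier (AutG_group G S sc act)"
    hence FA: "F \<in> A" and FA': "F' \<in> A" using cA by auto
    obtain a where a: "a \<in> normalizer G S" "F (chi S) = chi (S #> a)" "pi_map G S F = S #> a" using ex[OF FA] by blast
    obtain b where b: "b \<in> normalizer G S" "F' (chi S) = chi (S #> b)" "pi_map G S F' = S #> b" using ex[OF FA'] by blast
    have ac: "a \<in> carrier G" and bc: "b \<in> carrier G" using a b N_carr by auto
    have "restrict (F \<circ> F') I (chi S) = F (chi (S #> b))" using chiS_I b by simp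
    also have "\<dots> = F (ind_act G (inv b) (chi S))" using chi_coset_act[OF bc] by simp
    also have "\<dots> = ind_act G (inv b) (chi (S #> a))" using F_act[OF FA _ chiS_I] bc a by simp
    also have "\<dots> = chi (S #> (a \<otimes> b))" using chi_act[OF ac inv_closed[OF bc]] bc by simp
    finally have "pi_map G S (restrict (F \<circ> F') I) = S #> (a \<otimes> b)" using pi_eq ac bc by simp
    thus "pi_map G S (monoid.mult (AutG_group G S sc act) F F')
        = monoid.mult (normalizer_quot G S) (pi_map G S F) (pi_map G S F')"
      unfolding mA NQ_mult a(3) b(3) using coset_mult_N[OF a(1) bc] by simp
  qed
qed


lemma AutS_iff: "f \<in> AutS S sc act \<longleftrightarrow> bij f \<and> alg_hom sc f \<and> (\<forall>s\<in>S. \<forall>b. f (act s b) = act s (f b))"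
  unfolding AutS_def by (rule mem_Collect_eq)

lemma comp_I:
  assumes h: "alg_hom sc f" and eqv: "\<And>s b. s \<in> S \<Longrightarrow> f (act s b) = act s (f b)" and r: "r \<in> I"
  shows "f \<circ> r \<in> I"
proof (rule I_intro)
  fix x assume "x \<notin> carrier G" thus "(f \<circ> r) x = 0" using I_out[OF r] alg_hom_0[OF h] by simp
next
  fix s y assume "s \<in> S" "y \<in> carrier G"
  thus "(f \<circ> r) (s \<otimes> y) = act s ((f \<circ> r) y)" using I_eq[OF r] eqv by simp
qed

lemma AutS_inv:
  assumes f: "f \<in> AutS S sc act" shows "inv_into UNIV f \<in> AutS S sc act"
proof -
  have b: "bij f" and h: "alg_hom sc f" and e: "\<And>s b. s \<in> S \<Longrightarrow> f (act s b) = act s (f b)"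
    using f AutS_iff by auto
  have fi: "\<And>x. f (inv_into UNIV f x) = x" using b by (simp add: bij_is_surj surj_f_inv_f)
  have if': "\<And>x. inv_into UNIV f (f x) = x" using b by (simp add: bij_is_inj)
  have "inv_into UNIV f (act s b') = act s (inv_into UNIV f b')" if "s \<in> S" for s b'
  proof -
    have "f (act s (inv_into UNIV f b')) = act s b'" using e[OF that] fi by simp
    hence "inv_into UNIV f (f (act s (inv_into UNIV f b'))) = inv_into UNIV f (act s b')" by simp
    thus ?thesis using if' by simp
  qed
  thus ?thesis unfolding AutS_iff using bij_imp_bij_inv[OF b] alg_hom_inv[OF b h] by blast
qed

lemma indmap_app: "r \<in> I \<Longrightarrow> ind_map G S act f r = f \<circ> r"
  by (simp add: ind_map_def)

lemma indmap_A:
  assumes f: "f \<in> AutS S sc act" shows "ind_map G S act f \<in> A"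
proof -
  have b: "bij f" and h: "alg_hom sc f" and e: "\<And>s b. s \<in> S \<Longrightarrow> f (act s b) = act s (f b)"
    using f AutS_iff by auto
  define g where "g = inv_into UNIV f"
  have g: "g \<in> AutS S sc act" unfolding g_def using AutS_inv[OF f] .
  have hg: "alg_hom sc g" and eg: "\<And>s b. s \<in> S \<Longrightarrow> g (act s b) = act s (g b)" using g AutS_iff by auto
  have fi: "\<And>x. f (g x) = x" unfolding g_def using b by (simp add: bij_is_surj surj_f_inv_f)
  have if': "\<And>x. g (f x) = x" unfolding g_def using b by (simp add: bij_is_inj)
  have cf: "f \<circ> r \<in> I" if "r \<in> I" for r using comp_I[OF h e that] .
  have cg: "g \<circ> r \<in> I" if "r \<in> I" for r using comp_I[OF hg eg that] .
  show ?thesis unfolding AutG_iff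
  proof (intro conjI ballI allI)
    show "ind_map G S act f \<in> extensional I" unfolding ind_map_def by simp
    show "bij_betw (ind_map G S act f) I I"
    proof (rule bij_betw_byWitness[where f'="ind_map G S act g"])
      show "\<forall>a\<in>I. ind_map G S act g (ind_map G S act f a) = a"
        using cf by (simp add: indmap_app if' comp_def)
      show "\<forall>a\<in>I. ind_map G S act f (ind_map G S act g a) = a"
        using cg by (simp add: indmap_app fi comp_def)
      show "ind_map G S act f ` I \<subseteq> I" using cf indmap_app by auto
      show "ind_map G S act g ` I \<subseteq> I" using cg indmap_app by auto
    qed
  next
    fix r r' assume r: "r \<in> I" and r': "r' \<in> I"
    show "ind_map G S act f (\<lambda>x. r x + r' x) = (\<lambda>x. ind_map G S act f r x + ind_map G S act f r' x)"
      using add_I[OF r r'] r r' by (simp add: indmap_app alg_hom_add[OF h] comp_def)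
    show "ind_map G S act f (\<lambda>x. r x * r' x) = (\<lambda>x. ind_map G S act f r x * ind_map G S act f r' x)"
      using mult_I[OF r r'] r r' by (simp add: indmap_app alg_hom_mult[OF h] comp_def)
  next
    show "ind_map G S act f (ind_one G) = ind_one G"
    proof -
      have "f 0 = 0" "f 1 = 1" using alg_hom_0[OF h] alg_hom_1[OF h] by auto
      thus ?thesis using ind_one_I by (simp add: indmap_app ind_one_def comp_def fun_eq_iff)
    qed
  next
    fix a r assume r: "r \<in> I"
    show "ind_map G S act f (\<lambda>x. sc a (r x)) = (\<lambda>x. sc a (ind_map G S act f r x))"
      using sc_I[OF r] r by (simp add: indmap_app alg_hom_sc[OF h] comp_def)
  next
    fix g r assume gc: "g \<in> carrier G" and r: "r \<in> I"
    show "ind_map G S act f (ind_act G g r) = ind_act G g (ind_map G S act f r)"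
    proof -
      have "f 0 = 0" using alg_hom_0[OF h] by auto
      thus ?thesis using ind_act_I[OF gc r] r by (simp add: indmap_app ind_act_def comp_def fun_eq_iff)
    qed
  qed
qed

lemma indmap_hom: "ind_map G S act \<in> hom (AutS_group S sc act) (AutG_group G S sc act)"
  unfolding hom_def
proof (intro CollectI conjI ballI)
  show "ind_map G S act \<in> carrier (AutS_group S sc act) \<rightarrow> carrier (AutG_group G S sc act)"
    using indmap_A by (auto simp: AutS_group_def AutG_group_def)
next
  fix f f' assume "f \<in> carrier (AutS_group S sc act)" "f' \<in> carrier (AutS_group S sc act)"
  hence f: "f \<in> AutS S sc act" and f': "f' \<in> AutS S sc act" by (auto simp: AutS_group_def)
  have h': "alg_hom sc f'" and e': "\<And>s b. s \<in> S \<Longrightarrow> f' (act s b) = act s (f' b)" using f' AutS_iff by auto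
  show "ind_map G S act (f \<otimes>\<^bsub>AutS_group S sc act\<^esub> f') =
       ind_map G S act f \<otimes>\<^bsub>AutG_group G S sc act\<^esub> ind_map G S act f'"
  proof -
    have "ind_map G S act (f \<circ> f') = restrict (ind_map G S act f \<circ> ind_map G S act f') I"
    proof
      fix r show "ind_map G S act (f \<circ> f') r = restrict (ind_map G S act f \<circ> ind_map G S act f') I r"
        using comp_I[OF h' e', of r] by (cases "r \<in> I") (auto simp: indmap_app ind_map_def comp_assoc)
    qed
    thus ?thesis by (simp add: AutS_group_def AutG_group_def)
  qed
qed

lemma indmap_inj: "inj_on (ind_map G S act) (AutS S sc act)"
proof (rule inj_onI)
  fix f f' assume "f \<in> AutS S sc act" "f' \<in> AutS S sc act" and e: "ind_map G S act f = ind_map G S act f'"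
  show "f = f'"
  proof
    fix b
    have "ind_map G S act f (rr \<one> b) \<one> = ind_map G S act f' (rr \<one> b) \<one>" using e by simp
    thus "f b = f' b" using rr_I[OF one_closed, of b] by (simp add: indmap_app)
  qed
qed

lemma indmap_chi: "f \<in> AutS S sc act \<Longrightarrow> ind_map G S act f (chi S) = chi S"
  using chiS_I AutS_iff alg_hom_0 alg_hom_1
  by (auto simp: indmap_app chi_def comp_def fun_eq_iff)


lemma r1_eq: "rr \<one> b = (\<lambda>y. if y \<in> S then act y b else 0)"
  unfolding rr_def by (rule ext) auto
lemma r1_I: "rr \<one> b \<in> I" using rr_I[OF one_closed] .
lemma r1_add: "rr \<one> (b + c) = (\<lambda>x. rr \<one> b x + rr \<one> c x)"
  unfolding r1_eq by (rule ext) (simp add: act_add)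
lemma r1_mult: "rr \<one> (b * c) = (\<lambda>x. rr \<one> b x * rr \<one> c x)"
  unfolding r1_eq by (rule ext) (simp add: act_times)
lemma r1_sc: "rr \<one> (sc a b) = (\<lambda>x. sc a (rr \<one> b x))"
  unfolding r1_eq by (rule ext) (simp add: act_sc)
lemma r1_one: "rr \<one> 1 = chi S"
  unfolding r1_eq chi_def by (rule ext) simp
lemma r1_chi: "(\<lambda>x. rr \<one> b x * chi S x) = rr \<one> b"
  unfolding r1_eq chi_def by (rule ext) simp
lemma r1_act: "t \<in> S \<Longrightarrow> ind_act G t (rr \<one> b) = rr \<one> (act t b)"
  unfolding r1_eq ind_act_def by (rule ext) (auto simp: S_right_iff act_mult)

lemma lemmaC:
  assumes FA: "F \<in> A" and g: "g \<in> carrier G" and Fg: "F (chi S) = chi (S #> g)"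
  defines "\<phi> \<equiv> (\<lambda>b. F (rr \<one> b) g)"
  shows "bij \<phi> \<and> alg_hom sc \<phi> \<and> (\<forall>s\<in>S. \<forall>b. \<phi> (act s b) = act (g \<otimes> s \<otimes> inv g) (\<phi> b))"
proof -
  have gN: "g \<in> normalizer G S" using lemmaB2[OF FA g Fg] .
  have supp: "F (rr \<one> b) x = 0" if "x \<notin> S #> g" for b x
  proof -
    have "F (rr \<one> b) = (\<lambda>x. F (rr \<one> b) x * chi (S #> g) x)"
      using F_mult[OF FA r1_I chiS_I, of b] Fg r1_chi by simp
    from fun_cong[OF this, of x] show ?thesis using that by (simp add: chi_def)
  qed
  have hom: "alg_hom sc \<phi>" unfolding alg_hom_def \<phi>_def
  proof (intro conjI allI)
    fix x y
    show "F (rr \<one> (x + y)) g = F (rr \<one> x) g + F (rr \<one> y) g"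
      unfolding r1_add using F_add[OF FA r1_I r1_I] by simp
    show "F (rr \<one> (x * y)) g = F (rr \<one> x) g * F (rr \<one> y) g"
      unfolding r1_mult using F_mult[OF FA r1_I r1_I] by simp
  next
    show "F (rr \<one> 1) g = 1" unfolding r1_one Fg using rcos_self[OF g subS] by (simp add: chi_def)
  next
    fix a x show "F (rr \<one> (sc a x)) g = sc a (F (rr \<one> x) g)"
      unfolding r1_sc using F_sc[OF FA r1_I] by simp
  qed
  have tw: "\<phi> (act s b) = act (g \<otimes> s \<otimes> inv g) (\<phi> b)" if s: "s \<in> S" for s b
  proof -
    have c: "g \<otimes> s \<otimes> inv g \<in> S" using N_conj[OF gN s] .
    have "\<phi> (act s b) = ind_act G s (F (rr \<one> b)) g"
      unfolding \<phi>_def r1_act[OF s, symmetric] using F_act[OF FA _ r1_I] s by simp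
    also have "\<dots> = F (rr \<one> b) (g \<otimes> s)" using g by (simp add: ind_act_def)
    also have "g \<otimes> s = (g \<otimes> s \<otimes> inv g) \<otimes> g" using g s by (simp add: m_assoc)
    also have "F (rr \<one> b) ((g \<otimes> s \<otimes> inv g) \<otimes> g) = act (g \<otimes> s \<otimes> inv g) (\<phi> b)"
      unfolding \<phi>_def using I_eq[OF F_I[OF FA r1_I] c g] .
    finally show ?thesis .
  qed
  have ker: "b = 0" if z: "\<phi> b = 0" for b
  proof -
    have "F (rr \<one> b) = (\<lambda>x. 0)"
    proof
      fix x show "F (rr \<one> b) x = 0"
      proof (cases "x \<in> S #> g")
        case True
        then obtain s where s: "s \<in> S" "x = s \<otimes> g" using rcos_obtain by blast
        have "F (rr \<one> b) (s \<otimes> g) = act s (F (rr \<one> b) g)" using I_eq[OF F_I[OF FA r1_I] s(1) g] .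
        thus ?thesis using s z unfolding \<phi>_def by simp
      next
        case False thus ?thesis using supp by blast
      qed
    qed
    hence "F (rr \<one> b) = F (\<lambda>x. 0)" using F_zero[OF FA] by simp
    hence "rr \<one> b = (\<lambda>x. 0)" using F_inj[OF FA r1_I zero_I] by blast
    from fun_cong[OF this, of \<one>] show "b = 0" by (simp add: rr_def)
  qed
  have inj: "inj \<phi>"
  proof (rule injI)
    fix b c assume "\<phi> b = \<phi> c"
    hence "\<phi> (b - c) = 0" using alg_hom_diff[OF hom] by simp
    thus "b = c" using ker by fastforce
  qed
  have surj: "surj \<phi>" unfolding surj_def
  proof (intro allI)
    fix c
    obtain d where dI: "d \<in> I" and Fd: "F d = rr g c" using F_surj[OF FA rr_I[OF g]] by blast
    have rrchi: "(\<lambda>x. rr g c x * chi (S #> g) x) = rr g c"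
      by (rule ext) (simp add: chi_def rr_supp[OF g])
    have dchi: "(\<lambda>x. d x * chi S x) = d"
    proof (rule F_inj[OF FA mult_I[OF dI chiS_I] dI])
      show "F (\<lambda>x. d x * chi S x) = F d" using F_mult[OF FA dI chiS_I] Fd Fg rrchi by simp
    qed
    have "d = rr \<one> (d \<one>)"
    proof
      fix x show "d x = rr \<one> (d \<one>) x"
      proof (cases "x \<in> S")
        case True
        have "d (x \<otimes> \<one>) = act x (d \<one>)" using I_eq[OF dI True one_closed] .
        thus ?thesis using True by (simp add: r1_eq)
      next
        case False
        thus ?thesis using fun_cong[OF dchi, of x] by (simp add: r1_eq chi_def)
      qed
    qed
    hence "\<phi> (d \<one>) = F d g" unfolding \<phi>_def by simp
    hence "\<phi> (d \<one>) = c" using Fd g by simp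
    thus "\<exists>b. c = \<phi> b" by metis
  qed
  show ?thesis using hom tw inj surj bij_def by blast
qed

lemma lemmaC2:
  assumes FA: "F \<in> A" and Fg: "F (chi S) = chi S"
  shows "F = ind_map G S act (\<lambda>b. F (rr \<one> b) \<one>)"
proof
  define \<phi> where "\<phi> = (\<lambda>b. F (rr \<one> b) \<one>)"
  have "F (chi S) = chi (S #> \<one>)" using Fg chiS_eq by simp
  hence h: "alg_hom sc \<phi>" using lemmaC[OF FA one_closed] unfolding \<phi>_def by blast
  fix r show "F r = ind_map G S act \<phi> r"
  proof (cases "r \<in> I")
    case False thus ?thesis using F_ext[OF FA] by (simp add: ind_map_def extensional_def)
  next
    case r: True
    show ?thesis
    proof
      fix x show "F r x = ind_map G S act \<phi> r x"
      proof (cases "x \<in> carrier G")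
        case False thus ?thesis using I_out[OF F_I[OF FA r]] I_out[OF r] r alg_hom_0[OF h] by (simp add: indmap_app)
      next
        case x: True
        define r' where "r' = ind_act G x r"
        have r'I: "r' \<in> I" unfolding r'_def using ind_act_I[OF x r] .
        have r'chi: "(\<lambda>y. r' y * chi S y) = rr \<one> (r x)"
        proof
          fix y show "r' y * chi S y = rr \<one> (r x) y"
            using I_eq[OF r _ x, of y] by (simp add: r'_def ind_act_def chi_def r1_eq)
        qed
        have "F r x = ind_act G x (F r) \<one>" using x by (simp add: ind_act_def)
        also have "\<dots> = F r' \<one>" unfolding r'_def using F_act[OF FA x r] by simp
        also have "\<dots> = F r' \<one> * chi S \<one>" by (simp add: chi_def)
        also have "\<dots> = F (\<lambda>y. r' y * chi S y) \<one>" using F_mult[OF FA r'I chiS_I] Fg by simp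
        also have "\<dots> = \<phi> (r x)" unfolding r'chi \<phi>_def ..
        finally show ?thesis using r by (simp add: indmap_app)
      qed
    qed
  qed
qed


lemma mult_inv_cancel1[simp]: "x \<in> carrier G \<Longrightarrow> y \<in> carrier G \<Longrightarrow> x \<otimes> (inv x \<otimes> y) = y"
  by (simp add: m_assoc[symmetric])
lemma mult_inv_cancel2[simp]: "x \<in> carrier G \<Longrightarrow> y \<in> carrier G \<Longrightarrow> inv x \<otimes> (x \<otimes> y) = y"
  by (simp add: m_assoc[symmetric])

definition Phi :: "('b \<Rightarrow> 'b) \<Rightarrow> 'g \<Rightarrow> ('g \<Rightarrow> 'b) \<Rightarrow> 'g \<Rightarrow> 'b" where
  "Phi \<phi> g = restrict (\<lambda>r x. if x \<in> carrier G then \<phi> (r (inv g \<otimes> x)) else 0) I"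

definition tw :: "('b \<Rightarrow> 'b) \<Rightarrow> 'g \<Rightarrow> bool" where
  "tw \<phi> g \<longleftrightarrow> (\<forall>s\<in>S. \<forall>b. \<phi> (act s b) = act (g \<otimes> s \<otimes> inv g) (\<phi> b))"

lemma Phi_app: "r \<in> I \<Longrightarrow> Phi \<phi> g r = (\<lambda>x. if x \<in> carrier G then \<phi> (r (inv g \<otimes> x)) else 0)"
  by (simp add: Phi_def)

lemma Phi_I:
  assumes h: "alg_hom sc \<phi>" and t: "tw \<phi> g" and g: "g \<in> carrier G"
    and c: "\<And>s. s \<in> S \<Longrightarrow> inv g \<otimes> s \<otimes> g \<in> S" and r: "r \<in> I"
  shows "Phi \<phi> g r \<in> I"
  unfolding Phi_app[OF r]
proof (rule I_intro)
  fix x assume "x \<notin> carrier G" thus "(if x \<in> carrier G then \<phi> (r (inv g \<otimes> x)) else 0) = 0" by simp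
next
  fix s y assume s: "s \<in> S" and y: "y \<in> carrier G"
  define u where "u = inv g \<otimes> s \<otimes> g"
  have u: "u \<in> S" unfolding u_def using c[OF s] .
  have e1: "inv g \<otimes> (s \<otimes> y) = u \<otimes> (inv g \<otimes> y)" unfolding u_def using g s y by (simp add: m_assoc)
  have e2: "g \<otimes> u \<otimes> inv g = s" unfolding u_def using g s by (simp add: m_assoc)
  have "\<phi> (r (inv g \<otimes> (s \<otimes> y))) = \<phi> (act u (r (inv g \<otimes> y)))" unfolding e1 using I_eq[OF r u] g y by simp
  also have "\<dots> = act s (\<phi> (r (inv g \<otimes> y)))" using t u e2 unfolding tw_def by simp
  finally show "(if s \<otimes> y \<in> carrier G then \<phi> (r (inv g \<otimes> (s \<otimes> y))) else 0) =
      act s (if y \<in> carrier G then \<phi> (r (inv g \<otimes> y)) else 0)" using s y by simp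
qed

lemma tw_inv:
  assumes b: "bij \<phi>" and t: "tw \<phi> g" and g: "g \<in> carrier G"
    and c: "\<And>s. s \<in> S \<Longrightarrow> inv g \<otimes> s \<otimes> g \<in> S"
  shows "tw (inv_into UNIV \<phi>) (inv g)"
  unfolding tw_def
proof (intro ballI allI)
  fix s b' assume s: "s \<in> S"
  define \<psi> where "\<psi> = inv_into UNIV \<phi>"
  have fi: "\<And>x. \<phi> (\<psi> x) = x" unfolding \<psi>_def using b by (simp add: bij_is_surj surj_f_inv_f)
  have if': "\<And>x. \<psi> (\<phi> x) = x" unfolding \<psi>_def using b by (simp add: bij_is_inj)
  define u where "u = inv g \<otimes> s \<otimes> g"
  have u: "u \<in> S" unfolding u_def using c[OF s] .
  have e2: "g \<otimes> u \<otimes> inv g = s" unfolding u_def using g s by (simp add: m_assoc)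
  have "\<phi> (act u (\<psi> b')) = act s b'" using t u e2 fi unfolding tw_def by simp
  hence "\<psi> (act s b') = act u (\<psi> b')" using if' by metis
  thus "inv_into UNIV \<phi> (act s b') = act (inv g \<otimes> s \<otimes> inv (inv g)) (inv_into UNIV \<phi> b')"
    unfolding \<psi>_def u_def using g by simp
qed

lemma Phi_A:
  assumes b: "bij \<phi>" and h: "alg_hom sc \<phi>" and t: "tw \<phi> g" and gN: "g \<in> normalizer G S"
  shows "Phi \<phi> g \<in> A \<and> Phi \<phi> g (chi S) = chi (S #> g)"
proof -
  have g: "g \<in> carrier G" using N_carr[OF gN] .
  have c: "\<And>s. s \<in> S \<Longrightarrow> inv g \<otimes> s \<otimes> g \<in> S" using N_conj'[OF gN] .
  have c': "\<And>s. s \<in> S \<Longrightarrow> inv (inv g) \<otimes> s \<otimes> inv g \<in> S" using N_conj[OF gN] g by simp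
  define \<psi> where "\<psi> = inv_into UNIV \<phi>"
  have fi: "\<And>x. \<phi> (\<psi> x) = x" unfolding \<psi>_def using b by (simp add: bij_is_surj surj_f_inv_f)
  have if': "\<And>x. \<psi> (\<phi> x) = x" unfolding \<psi>_def using b by (simp add: bij_is_inj)
  have h': "alg_hom sc \<psi>" unfolding \<psi>_def using alg_hom_inv[OF b h] .
  have t': "tw \<psi> (inv g)" unfolding \<psi>_def using tw_inv[OF b t g c] .
  have PI: "Phi \<phi> g r \<in> I" if "r \<in> I" for r using Phi_I[OF h t g c that] .
  have PI': "Phi \<psi> (inv g) r \<in> I" if "r \<in> I" for r using Phi_I[OF h' t' inv_closed[OF g] c' that] .
  have p0: "\<phi> 0 = 0" using alg_hom_0[OF h] .
  have p1: "\<phi> 1 = 1" using alg_hom_1[OF h] .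
  have AA: "Phi \<phi> g \<in> A" unfolding AutG_iff
  proof (intro conjI ballI allI)
    show "Phi \<phi> g \<in> extensional I" unfolding Phi_def by simp
    show "bij_betw (Phi \<phi> g) I I"
    proof (rule bij_betw_byWitness[where f'="Phi \<psi> (inv g)"])
      show "\<forall>a\<in>I. Phi \<psi> (inv g) (Phi \<phi> g a) = a"
      proof
        fix r assume r: "r \<in> I"
        show "Phi \<psi> (inv g) (Phi \<phi> g r) = r"
          using PI[OF r] r g I_out[OF r] by (auto simp: Phi_app if' fun_eq_iff)
      qed
      show "\<forall>a\<in>I. Phi \<phi> g (Phi \<psi> (inv g) a) = a"
      proof
        fix r assume r: "r \<in> I"
        show "Phi \<phi> g (Phi \<psi> (inv g) r) = r"
          using PI'[OF r] r g I_out[OF r] by (auto simp: Phi_app fi fun_eq_iff)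
      qed
      show "Phi \<phi> g ` I \<subseteq> I" using PI by blast
      show "Phi \<psi> (inv g) ` I \<subseteq> I" using PI' by blast
    qed
  next
    fix r r' assume r: "r \<in> I" and r': "r' \<in> I"
    show "Phi \<phi> g (\<lambda>x. r x + r' x) = (\<lambda>x. Phi \<phi> g r x + Phi \<phi> g r' x)"
      using add_I[OF r r'] r r' by (simp add: Phi_app alg_hom_add[OF h] fun_eq_iff)
    show "Phi \<phi> g (\<lambda>x. r x * r' x) = (\<lambda>x. Phi \<phi> g r x * Phi \<phi> g r' x)"
      using mult_I[OF r r'] r r' by (simp add: Phi_app alg_hom_mult[OF h] fun_eq_iff)
  next
    show "Phi \<phi> g (ind_one G) = ind_one G"
      using ind_one_I g p1 by (simp add: Phi_app ind_one_def fun_eq_iff)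
  next
    fix a r assume r: "r \<in> I"
    show "Phi \<phi> g (\<lambda>x. sc a (r x)) = (\<lambda>x. sc a (Phi \<phi> g r x))"
      using sc_I[OF r] r by (simp add: Phi_app alg_hom_sc[OF h] fun_eq_iff)
  next
    fix k r assume k: "k \<in> carrier G" and r: "r \<in> I"
    show "Phi \<phi> g (ind_act G k r) = ind_act G k (Phi \<phi> g r)"
      using ind_act_I[OF k r] r PI[OF r] k g p0 by (simp add: Phi_app ind_act_def fun_eq_iff m_assoc)
  qed
  have "Phi \<phi> g (chi S) = chi (S #> g)"
  proof
    fix x show "Phi \<phi> g (chi S) x = chi (S #> g) x"
    proof (cases "x \<in> carrier G")
      case x: True
      have "(inv g \<otimes> x \<in> S) = (x \<in> S #> g)"
      proof
        assume a: "inv g \<otimes> x \<in> S"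
        have "g \<otimes> (inv g \<otimes> x) \<otimes> inv g \<in> S" using N_conj[OF gN a] .
        hence "x \<otimes> inv g \<in> S" using g x by simp
        thus "x \<in> S #> g" using rcos_iff g x by simp
      next
        assume "x \<in> S #> g"
        hence a: "x \<otimes> inv g \<in> S" using rcos_iff g x by simp
        have "inv g \<otimes> (x \<otimes> inv g) \<otimes> g \<in> S" using c[OF a] .
        thus "inv g \<otimes> x \<in> S" using g x by (simp add: m_assoc)
      qed
      thus ?thesis using x chiS_I p0 p1 by (simp add: Phi_app chi_def)
    next
      case False
      thus ?thesis using chiS_I rcos_carr g by (auto simp: Phi_app chi_def)
    qed
  qed
  thus ?thesis using AA by blast
qed


lemma kernel_eq: "ind_map G S act ` AutS S sc act
    = kernel (AutG_group G S sc act) (normalizer_quot G S) (pi_map G S)"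
proof
  show "ind_map G S act ` AutS S sc act \<subseteq> kernel (AutG_group G S sc act) (normalizer_quot G S) (pi_map G S)"
  proof
    fix F assume "F \<in> ind_map G S act ` AutS S sc act"
    then obtain f where f: "f \<in> AutS S sc act" and F: "F = ind_map G S act f" by blast
    have "F (chi S) = chi (S #> \<one>)" using indmap_chi[OF f] F chiS_eq by simp
    hence "pi_map G S F = S #> \<one>" using pi_eq[where F=F] by simp
    hence "pi_map G S F = S" using Ssub by simp
    thus "F \<in> kernel (AutG_group G S sc act) (normalizer_quot G S) (pi_map G S)"
      using indmap_A[OF f] F by (simp add: kernel_def AutG_group_def NQ_one)
  qed
next
  show "kernel (AutG_group G S sc act) (normalizer_quot G S) (pi_map G S) \<subseteq> ind_map G S act ` AutS S sc act"
  proof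
    fix F assume "F \<in> kernel (AutG_group G S sc act) (normalizer_quot G S) (pi_map G S)"
    hence FA: "F \<in> A" and pF: "pi_map G S F = S" by (simp_all add: kernel_def AutG_group_def NQ_one)
    obtain a where a: "a \<in> carrier G" "F (chi S) = chi (S #> a)" using lemmaB1[OF FA] by blast
    have "S #> a = S" using pi_eq[where F=F, OF a] pF by simp
    hence Fc: "F (chi S) = chi S" using a by simp
    hence Fc1: "F (chi S) = chi (S #> \<one>)" using chiS_eq by simp
    define \<phi> where "\<phi> = (\<lambda>b. F (rr \<one> b) \<one>)"
    have "bij \<phi> \<and> alg_hom sc \<phi> \<and> (\<forall>s\<in>S. \<forall>b. \<phi> (act s b) = act (\<one> \<otimes> s \<otimes> inv \<one>) (\<phi> b))"
      unfolding \<phi>_def using lemmaC[OF FA one_closed Fc1] by simp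
    hence "\<phi> \<in> AutS S sc act" unfolding AutS_iff by simp
    moreover have "F = ind_map G S act \<phi>" unfolding \<phi>_def using lemmaC2[OF FA Fc] .
    ultimately show "F \<in> ind_map G S act ` AutS S sc act" by blast
  qed
qed

lemma surj_iff: "(pi_map G S ` AutG G S sc act = carrier (normalizer_quot G S))
    \<longleftrightarrow> (\<forall>g\<in>normalizer G S. iso_twist G S sc act g)"
proof
  assume e: "pi_map G S ` AutG G S sc act = carrier (normalizer_quot G S)"
  show "\<forall>g\<in>normalizer G S. iso_twist G S sc act g"
  proof
    fix g assume gN: "g \<in> normalizer G S"
    have g: "g \<in> carrier G" using N_carr[OF gN] .
    have "S #> g \<in> carrier (normalizer_quot G S)" using gN NQ_carrier by simp
    then obtain F where FA: "F \<in> A" and pF: "pi_map G S F = S #> g" using e by (metis imageE)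
    obtain a where a: "a \<in> carrier G" "F (chi S) = chi (S #> a)" using lemmaB1[OF FA] by blast
    have "S #> a = S #> g" using pi_eq[where F=F, OF a] pF by simp
    hence Fg: "F (chi S) = chi (S #> g)" using a by simp
    show "iso_twist G S sc act g" unfolding iso_twist_def using lemmaC[OF FA g Fg] by blast
  qed
next
  assume all: "\<forall>g\<in>normalizer G S. iso_twist G S sc act g"
  show "pi_map G S ` AutG G S sc act = carrier (normalizer_quot G S)"
  proof
    show "pi_map G S ` AutG G S sc act \<subseteq> carrier (normalizer_quot G S)"
      using pi_hom by (auto simp: hom_def AutG_group_def Pi_def)
  next
    show "carrier (normalizer_quot G S) \<subseteq> pi_map G S ` AutG G S sc act"
    proof
      fix M assume "M \<in> carrier (normalizer_quot G S)"
      then obtain g where gN: "g \<in> normalizer G S" and M: "M = S #> g" using NQ_carrier by auto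
      have g: "g \<in> carrier G" using N_carr[OF gN] .
      obtain \<phi> where b: "bij \<phi>" and h: "alg_hom sc \<phi>"
        and t: "\<forall>s\<in>S. \<forall>b. \<phi> (act s b) = act (g \<otimes> s \<otimes> inv g) (\<phi> b)"
        using all gN unfolding iso_twist_def by blast
      have "tw \<phi> g" unfolding tw_def using t .
      from Phi_A[OF b h this gN]
      have PA: "Phi \<phi> g \<in> A" and Pc: "Phi \<phi> g (chi S) = chi (S #> g)" by auto
      have "pi_map G S (Phi \<phi> g) = M" using pi_eq[where F="Phi \<phi> g", OF g Pc] M by simp
      thus "M \<in> pi_map G S ` AutG G S sc act" using PA by blast
    qed
  qed
qed

end

theorem proposition3p1:
  fixes G :: "'g monoid" and S :: "'g set"
    and sc :: "'k::field \<Rightarrow> 'b::ring_1 \<Rightarrow> 'b" and act :: "'g \<Rightarrow> 'b \<Rightarrow> 'b"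
  assumes "group G" and "finite (carrier G)" and "subgroup S G"
    and "galois_algebra G S sc act" and "simple_algebra sc"
  shows "ind_map G S act \<in> hom (AutS_group S sc act) (AutG_group G S sc act)
       \<and> inj_on (ind_map G S act) (AutS S sc act)
       \<and> pi_map G S \<in> hom (AutG_group G S sc act) (normalizer_quot G S)
       \<and> ind_map G S act ` AutS S sc act
           = kernel (AutG_group G S sc act) (normalizer_quot G S) (pi_map G S)
       \<and> (pi_map G S ` AutG G S sc act = carrier (normalizer_quot G S)
           \<longleftrightarrow> (\<forall>g\<in>normalizer G S. iso_twist G S sc act g))"
proof -
  have salg: "S_algebra G S sc act" using assms(4) unfolding galois_algebra_def by (elim conjE)
  interpret P: P3 G S sc act
    by (rule P3.intro[OF assms(1) P3_axioms.intro[OF assms(2) assms(3) salg assms(5)]])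
  show ?thesis using P.indmap_hom P.indmap_inj P.pi_hom P.kernel_eq P.surj_iff by blast
qed

end
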